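(* Let $\lambda\ge 0$ and $\Omega:\mathbb{R}^d\to[0,\infty)$ be fixed, and define for any finite set of samples $S\subset\mathbb{R}^d\times\mathbb{R}$ and $\boldsymbol{\theta}=(\mathbf{w},b)\in\mathbb{R}^{d+1}$ $$\mathrm{MSE}(S,\boldsymbol{\theta})=\frac{1}{|S|}\sum_{(\mathbf{x},y)\in S}(\mathbf{w}^\top\mathbf{x}+b-y)^2,\qquad \mathcal{L}(S,\boldsymbol{\theta})=\mathrm{MSE}(S,\boldsymbol{\theta})+\lambda\,\Omega(\mathbf{w}).$$ Let $\mathcal{D}_{tr}$ be a pristine training set of $n$ samples, let $0\le\alpha<1$ be such that $\alpha n$ is an integer, and let $\mathcal{D}_p$ be an arbitrary set of $\alpha n$ samples (poisoning points), so that $\mathcal{D}=\mathcal{D}_{tr}\cup\mathcal{D}_p$ has $N=(1+\alpha)n$ samples indexed by $\{1,\dots,N\}$. Let $(\hat{\boldsymbol{\theta}},\hat{\mathcal{I}})$ be a global minimizer of $$\min_{\boldsymbol{\theta},\,\mathcal{I}}\ \mathcal{L}(\mathcal{D}^{\mathcal{I}},\boldsymbol{\theta})\quad\text{subject to } \mathcal{I}\subseteq\{1,\dots,N\},\ |\mathcal{I}|=n,$$ where $\mathcal{D}^{\mathcal{I}}$ denotes the samples of $\mathcal{D}$ with indices in $\mathcal{I}$, and let $\boldsymbol{\theta}^*\in\arg\min_{\boldsymbol{\theta}}\mathcal{L}(\mathcal{D}_{tr},\boldsymbol{\theta})$. Then there exists a subset $\mathcal{D}'\subseteq\mathcal{D}_{tr}$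 of $(1-\alpha)n$ pristine samples such that $$\mathrm{MSE}(\mathcal{D}',\hat{\boldsymbol{\theta}})\le\Big(1+\frac{\alpha}{1-\alpha}\Big)\,\mathcal{L}(\mathcal{D}_{tr},\boldsymbol{\theta}^* ).$$ No assumption is made on how $\mathcal{D}_p$ is generated.
   Context: $\mathcal{L}$ is the regularized linear-regression loss with linear predictor $f(\mathbf{x},\boldsymbol{\theta})=\mathbf{w}^\top\mathbf{x}+b$; typical choices of $\Omega$ are $0$ (OLS), $\tfrac12\|\mathbf{w}\|_2^2$ (ridge), $\|\mathbf{w}\|_1$ (LASSO), or an elastic-net combination. *)

theory Defs
  imports "HOL-Analysis.Analysis"
begin

text \<open>A dataset of N samples is given by features X :: nat => real^'d and labels
Y :: nat => real, indexed by {1..N}; a sub-dataset is an index set I.\<close>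

definition MSE :: "(nat \<Rightarrow> real^'d) \<Rightarrow> (nat \<Rightarrow> real) \<Rightarrow> nat set \<Rightarrow> real^'d \<Rightarrow> real \<Rightarrow> real" where
  "MSE X Y I w b = (1 / real (card I)) * (\<Sum>i\<in>I. (w \<bullet> X i + b - Y i)\<^sup>2)"

definition Loss :: "real \<Rightarrow> (real^'d \<Rightarrow> real) \<Rightarrow> (nat \<Rightarrow> real^'d) \<Rightarrow> (nat \<Rightarrow> real) \<Rightarrow> nat set \<Rightarrow> real^'d \<Rightarrow> real \<Rightarrow> real" where
  "Loss lam \<Omega> X Y I w b = MSE X Y I w b + lam * \<Omega> w"

end

theory Submission
  imports Defs
begin

theorem theorem2:
  fixes lam :: real and \<Omega> :: "real^'d \<Rightarrow> real"
    and X :: "nat \<Rightarrow> real^'d" and Y :: "nat \<Rightarrow> real"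
    and n m :: nat and \<alpha> :: real
    and Dtr :: "nat set"
    and w_hat :: "real^'d" and b_hat :: real and I_hat :: "nat set"
    and w_star :: "real^'d" and b_star :: real
  assumes lam_nonneg: "lam \<ge> 0"
    and Omega_nonneg: "\<And>w. \<Omega> w \<ge> 0"
    and alpha: "0 \<le> \<alpha>" "\<alpha> < 1"
    and m_def: "real m = \<alpha> * real n"
    and Dtr_sub: "Dtr \<subseteq> {1..n + m}"
    and Dtr_card: "card Dtr = n"
    and I_hat_sub: "I_hat \<subseteq> {1..n + m}"
    and I_hat_card: "card I_hat = n"
    and hat_min: "\<And>I w b. I \<subseteq> {1..n + m} \<Longrightarrow> card I = n \<Longrightarrow>
                    Loss lam \<Omega> X Y I_hat w_hat b_hat \<le> Loss lam \<Omega> X Y I w b"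
    and star_min: "\<And>w b. Loss lam \<Omega> X Y Dtr w_star b_star \<le> Loss lam \<Omega> X Y Dtr w b"
  shows "\<exists>D'. D' \<subseteq> Dtr \<and> card D' = n - m \<and>
           MSE X Y D' w_hat b_hat \<le> (1 + \<alpha> / (1 - \<alpha>)) * Loss lam \<Omega> X Y Dtr w_star b_star"
  proof -
  have finI: "finite I_hat" using I_hat_sub finite_subset by blast
  have finD: "finite Dtr" using Dtr_sub finite_subset by blast
  have "card (Dtr \<union> I_hat) \<le> n + m"
    using Dtr_sub I_hat_sub by (metis card_mono finite_atLeastAtMost Un_least card_atLeastAtMost diff_Suc_1 le_refl)
  moreover have "card (Dtr \<union> I_hat) + card (Dtr \<inter> I_hat) = n + n"
    using card_Un_Int[OF finD finI] Dtr_card I_hat_card by simp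
  ultimately have "n - m \<le> card (Dtr \<inter> I_hat)" by linarith
  then obtain D' where D': "D' \<subseteq> Dtr \<inter> I_hat" "card D' = n - m"
    by (meson obtain_subset_with_card_n)
  have finD': "finite D'" using D' finI finite_subset by blast
  define L where "L = Loss lam \<Omega> X Y Dtr w_star b_star"
  define S where "S = (\<Sum>i\<in>I_hat. (w_hat \<bullet> X i + b_hat - Y i)\<^sup>2)"
  define S' where "S' = (\<Sum>i\<in>D'. (w_hat \<bullet> X i + b_hat - Y i)\<^sup>2)"
  have SS: "S' \<le> S" unfolding S'_def S_def
    by (rule sum_mono2[OF finI]) (use D' in auto)
  have S'0: "S' \<ge> 0" unfolding S'_def by (simp add: sum_nonneg)
  have hl: "Loss lam \<Omega> X Y I_hat w_hat b_hat \<le> L"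
    unfolding L_def using hat_min[OF Dtr_sub Dtr_card] star_min order.trans by blast
  have lo: "lam * \<Omega> w_hat \<ge> 0" using lam_nonneg Omega_nonneg by simp
  have pos: "1 + \<alpha> / (1 - \<alpha>) = 1 / (1 - \<alpha>)" using alpha by (simp add: field_simps)
  show ?thesis
  proof (cases "n = 0")
    case True
    have "Loss lam \<Omega> X Y Dtr w_star b_star \<ge> 0"
      using True Dtr_card finD lo lam_nonneg Omega_nonneg by (simp add: Loss_def MSE_def)
    moreover have "1 + \<alpha> / (1 - \<alpha>) \<ge> 0" using pos alpha by simp
    ultimately show ?thesis using True D' by (intro exI[of _ D']) (auto simp: MSE_def)
  next
    case False
    have "m < n"
    proof -
      have "\<alpha> * real n < real n" using alpha False by simp
      thus ?thesis using m_def by linarith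
    qed
    have rnm: "real (n - m) = (1 - \<alpha>) * real n" using \<open>m < n\<close> m_def by (simp add: of_nat_diff algebra_simps)
    have npos: "real n > 0" using False by simp
    have "S / real n \<le> L" using hl lo I_hat_card unfolding Loss_def MSE_def S_def by simp
    hence SL: "S \<le> real n * L" using npos by (simp add: field_simps)
    have "MSE X Y D' w_hat b_hat = S' / ((1 - \<alpha>) * real n)"
      unfolding MSE_def S'_def using D'(2) rnm by simp
    also have "\<dots> \<le> real n * L / ((1 - \<alpha>) * real n)"
      using SS SL alpha npos by (intro divide_right_mono) auto
    also have "\<dots> = (1 + \<alpha> / (1 - \<alpha>)) * L" using pos npos alpha by (simp add: field_simps)
    finally show ?thesis using D' L_def by blast
  qed
qed

end
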